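(* Let $i\ge0$, $l\ge1$, $j_1,\ldots,j_l\ge0$ and $k_1,\ldots,k_l$ be integers. Then $$b_{i,j_1+\cdots+j_l,k_1+\cdots+k_l}=\sum\binom{i}{i_1,\ldots,i_l}\prod_{r=1}^{l}b_{i_r,j_r,k_r},$$ where the sum is over all tuples of integers $i_1\ge0,\ldots,i_l\ge0$ with $i_1+\cdots+i_l=i$.
   Context: For integers $i\ge0$, $j\ge0$ and real $k$, $b_{i,j,k}=\sum_{r=0}^{j}\binom{j}{r}(-1)^{j-r}(r+k)^i$, with the convention $0^0=1$. $\binom{i}{i_1,\ldots,i_l}=\frac{i!}{i_1!\cdots i_l!}$ is the multinomial coefficient. *)

theory Defs
  imports Main
begin

text \<open>b_{i,j,k} = sum_{r=0}^{j} binom(j,r) (-1)^(j-r) (r+k)^i, with 0^0 = 1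
  (Isabelle's power already satisfies 0 ^ 0 = 1). Here k is an integer.\<close>
definition bcoef :: "nat \<Rightarrow> nat \<Rightarrow> int \<Rightarrow> int" where
  "bcoef i j k = (\<Sum>r=0..j. int (j choose r) * (-1) ^ (j - r) * (int r + k) ^ i)"

definition multinom :: "nat \<Rightarrow> nat \<Rightarrow> (nat \<Rightarrow> nat) \<Rightarrow> nat" where
  "multinom i l ii = fact i div (\<Prod>r=1..l. fact (ii r))"

text \<open>Tuples (i_1,...,i_l) of nonnegative integers summing to i, represented as
  functions nat => nat that vanish outside {1..l}.\<close>
definition comps :: "nat \<Rightarrow> nat \<Rightarrow> (nat \<Rightarrow> nat) set" where
  "comps i l = {ii. (\<forall>r. r \<notin> {1..l} \<longrightarrow> ii r = 0) \<and> (\<Sum>r=1..l. ii r) = i}"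

end

theory Submission imports Defs begin

lemma D_suc:
  fixes f :: "nat \<Rightarrow> int"
  shows "(\<Sum>r=0..Suc j. int (Suc j choose r) * (-1)^(Suc j - r) * f r)
   = (\<Sum>r=0..j. int (j choose r) * (-1)^(j - r) * f (Suc r))
   - (\<Sum>r=0..j. int (j choose r) * (-1)^(j - r) * f r)"
proof -
  have A: "(\<Sum>r=0..Suc j. int (Suc j choose r) * (-1)^(Suc j - r) * f r)
     = (-1)^(Suc j) * f 0 + (\<Sum>r=0..j. int (j choose r) * (-1)^(j - r) * f (Suc r))
       + (\<Sum>r=0..j. int (j choose Suc r) * (-1)^(j - r) * f (Suc r))"
    apply (subst sum.atLeast0_atMost_Suc_shift)
    apply (simp only: comp_def binomial_Suc_Suc of_nat_add distrib_right sum.distrib diff_Suc_Suc)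
    apply simp
    done
  have B: "(\<Sum>r=0..j. int (j choose r) * (-1)^(j - r) * f r)
     = (-1)^j * f 0 + (\<Sum>r=0..j. int (j choose Suc r) * (-1)^(j - Suc r) * f (Suc r))"
  proof -
    let ?g = "\<lambda>r. int (j choose r) * (-1)^(j - r) * f r"
    have "(\<Sum>r=0..Suc j. ?g r) = ?g 0 + (\<Sum>r=0..j. ?g (Suc r))"
      by (simp only: sum.atLeast0_atMost_Suc_shift comp_def)
    moreover have "(\<Sum>r=0..Suc j. ?g r) = (\<Sum>r=0..j. ?g r)"
      by (simp add: sum.atLeast0_atMost_Suc)
    ultimately show ?thesis by simp
  qed
  have C: "(\<Sum>r=0..j. int (j choose Suc r) * (-1)^(j - r) * f (Suc r))
     = - (\<Sum>r=0..j. int (j choose Suc r) * (-1)^(j - Suc r) * f (Suc r))"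
    unfolding sum_negf[symmetric]
  proof (rule sum.cong[OF refl])
    fix r assume "r \<in> {0..j}"
    show "int (j choose Suc r) * (-1)^(j - r) * f (Suc r) = - (int (j choose Suc r) * (-1)^(j - Suc r) * f (Suc r))"
    proof (cases "r < j")
      case True
      then have "j - r = Suc (j - Suc r)" by simp
      then show ?thesis by simp
    next
      case False then show ?thesis by simp
    qed
  qed
  show ?thesis using A B C by simp
qed

lemma b_suc: "bcoef i (Suc j) k = bcoef i j (k+1) - bcoef i j k"
  unfolding bcoef_def using D_suc[of j "\<lambda>r. (int r + k)^i"] by (simp add: algebra_simps)

lemma b_zero: "bcoef i 0 k = k ^ i"
  by (simp add: bcoef_def)

lemma two:
  "bcoef i (j1+j2) (k1+k2) = (\<Sum>a=0..i. int (i choose a) * bcoef a j1 k1 * bcoef (i-a) j2 k2)"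
proof (induction j2 arbitrary: k2)
  case 0
  have "bcoef i j1 (k1+k2) = (\<Sum>r=0..j1. int (j1 choose r) * (-1)^(j1-r) * ((int r + k1) + k2)^i)"
    by (simp add: bcoef_def add.assoc)
  also have "\<dots> = (\<Sum>r=0..j1. \<Sum>a=0..i. int (i choose a) * (int (j1 choose r) * (-1)^(j1-r) * (int r + k1)^a) * k2^(i-a))"
  proof (rule sum.cong[OF refl])
    fix r assume "r \<in> {0..j1}"
    have "(int r + k1 + k2)^i = (\<Sum>a=0..i. of_nat (i choose a) * (int r + k1)^a * k2^(i-a))"
      using binomial_ring[of "int r + k1" k2 i] by (simp add: atLeast0AtMost)
    then show "int (j1 choose r) * (-1)^(j1-r) * ((int r + k1) + k2)^i = (\<Sum>a=0..i. int (i choose a) * (int (j1 choose r) * (-1)^(j1-r) * (int r + k1)^a) * k2^(i-a))"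
      by (simp add: sum_distrib_left algebra_simps atLeast0AtMost)
  qed
  also have "\<dots> = (\<Sum>a=0..i. int (i choose a) * bcoef a j1 k1 * k2^(i-a))"
    by (subst sum.swap) (simp add: bcoef_def sum_distrib_left sum_distrib_right algebra_simps)
  finally show ?case by (simp add: b_zero)
next
  case (Suc j2)
  have "bcoef i (j1 + Suc j2) (k1+k2) = bcoef i (j1+j2) (k1+(k2+1)) - bcoef i (j1+j2) (k1+k2)"
    by (simp add: b_suc algebra_simps)
  also have "\<dots> = (\<Sum>a=0..i. int (i choose a) * bcoef a j1 k1 * (bcoef (i-a) j2 (k2+1) - bcoef (i-a) j2 k2))"
    unfolding Suc.IH[of "k2+1"] Suc.IH[of k2] sum_subtractf[symmetric]
    by (rule sum.cong[OF refl]) (simp add: algebra_simps)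
  finally show ?case by (simp add: b_suc)
qed


definition cs :: "nat \<Rightarrow> nat set \<Rightarrow> (nat \<Rightarrow> nat) set" where
  "cs i S = {ii. (\<forall>r. r \<notin> S \<longrightarrow> ii r = 0) \<and> sum ii S = i}"

lemma cs_insert:
  assumes "finite S" "x \<notin> S"
  shows "cs i (insert x S) = (\<lambda>(a,ii). ii(x:=a)) ` (SIGMA a:{0..i}. cs (i-a) S)"
proof
  show "cs i (insert x S) \<subseteq> (\<lambda>(a,ii). ii(x:=a)) ` (SIGMA a:{0..i}. cs (i-a) S)"
  proof
    fix g assume g: "g \<in> cs i (insert x S)"
    have s: "g x + sum g S = i" using g assms by (simp add: cs_def)
    have e: "sum (g(x:=0)) S = sum g S"
      by (rule sum.cong) (use assms in auto)
    have "(g x, g(x:=0)) \<in> (SIGMA a:{0..i}. cs (i-a) S)"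
      using g s e by (auto simp: cs_def)
    moreover have "g = (\<lambda>(a,ii). ii(x:=a)) (g x, g(x:=0))" by simp
    ultimately show "g \<in> (\<lambda>(a,ii). ii(x:=a)) ` (SIGMA a:{0..i}. cs (i-a) S)" by blast
  qed
next
  show "(\<lambda>(a,ii). ii(x:=a)) ` (SIGMA a:{0..i}. cs (i-a) S) \<subseteq> cs i (insert x S)"
  proof clarify
    fix a ii assume a: "a \<in> {0..i}" and ii: "ii \<in> cs (i-a) S"
    have e: "sum (ii(x:=a)) S = sum ii S"
      by (rule sum.cong) (use assms in auto)
    show "ii(x:=a) \<in> cs i (insert x S)"
      using a ii e assms by (auto simp: cs_def)
  qed
qed

lemma cs_inj:
  assumes "x \<notin> S"
  shows "inj_on (\<lambda>(a,ii). ii(x:=a)) (SIGMA a:{0..i}. cs (i-a) S)"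
proof (rule inj_onI, clarify)
  fix a ii b jj
  assume ii: "ii \<in> cs (i-a) S" and jj: "jj \<in> cs (i-b) S" and eq: "ii(x:=a) = jj(x:=b)"
  have "a = b" using fun_cong[OF eq, of x] by simp
  moreover have "ii = jj"
  proof
    fix r show "ii r = jj r"
    proof (cases "r = x")
      case True then show ?thesis using ii jj assms by (simp add: cs_def)
    next
      case False then show ?thesis using fun_cong[OF eq, of r] by simp
    qed
  qed
  ultimately show "a = b \<and> ii = jj" by simp
qed

lemma cs_empty: "cs i {} = (if i = 0 then {\<lambda>_. 0} else {})"
  by (auto simp: cs_def)

lemma cs_finite: "finite S \<Longrightarrow> finite (cs i S)"
proof (induction S arbitrary: i rule: finite_induct)
  case empty then show ?case by (simp add: cs_empty)
next
  case (insert x S)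
  show ?case unfolding cs_insert[OF insert(1,2)]
    by (rule finite_imageI, rule finite_SigmaI) (auto intro: insert.IH)
qed

lemma prod_fact_dvd: "finite S \<Longrightarrow> (\<Prod>r\<in>S. fact (f r) :: nat) dvd fact (sum f S)"
proof (induction S rule: finite_induct)
  case empty then show ?case by simp
next
  case (insert x S)
  have "fact (f x) * (\<Prod>r\<in>S. fact (f r) :: nat) dvd fact (f x) * fact (sum f S)"
    using insert.IH by (rule mult_dvd_mono[OF dvd_refl])
  also have "\<dots> dvd fact (f x + sum f S)" by (rule fact_fact_dvd_fact)
  finally show ?case using insert by simp
qed

lemma div_key:
  fixes P :: nat
  assumes "a \<le> i" "P dvd fact (i-a)"
  shows "fact i div (fact a * P) = (i choose a) * (fact (i-a) div P)"
proof -
  obtain q where q: "fact (i-a) = P * q" using assms(2) by blast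
  have P0: "P > 0" using q by (metis fact_nonzero gr0I mult_is_0)
  have "fact i = (fact a * P) * (q * (i choose a))"
    using binomial_fact_lemma[OF assms(1)] q by (simp add: algebra_simps)
  then have "fact i div (fact a * P) = q * (i choose a)" using P0 by simp
  moreover have "fact (i-a) div P = q" using q P0 by simp
  ultimately show ?thesis by simp
qed

lemma gen:
  fixes j :: "nat \<Rightarrow> nat" and k :: "nat \<Rightarrow> int"
  shows "finite S \<Longrightarrow> bcoef i (sum j S) (sum k S)
     = (\<Sum>ii\<in>cs i S. int (fact i div (\<Prod>r\<in>S. fact (ii r))) * (\<Prod>r\<in>S. bcoef (ii r) (j r) (k r)))"
proof (induction S arbitrary: i rule: finite_induct)
  case empty
  then show ?case by (cases i) (simp_all add: cs_empty b_zero)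
next
  case (insert x S)
  let ?G = "\<lambda>g. int (fact i div (\<Prod>r\<in>insert x S. fact (g r))) * (\<Prod>r\<in>insert x S. bcoef (g r) (j r) (k r))"
  have fin: "finite (cs i S)" for i using cs_finite[OF insert(1)] .
  have key: "?G (ii(x:=a)) = int (i choose a) * bcoef a (j x) (k x) *
      (int (fact (i-a) div (\<Prod>r\<in>S. fact (ii r))) * (\<Prod>r\<in>S. bcoef (ii r) (j r) (k r)))"
    if a: "a \<in> {0..i}" and ii: "ii \<in> cs (i-a) S" for a ii
  proof -
    have p1: "(\<Prod>r\<in>insert x S. fact ((ii(x:=a)) r)) = fact a * (\<Prod>r\<in>S. fact (ii r) :: nat)"
      using insert(1,2) by (simp add: prod.insert) (rule prod.cong, auto)
    have p2: "(\<Prod>r\<in>insert x S. bcoef ((ii(x:=a)) r) (j r) (k r)) = bcoef a (j x) (k x) * (\<Prod>r\<in>S. bcoef (ii r) (j r) (k r))"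
    proof -
      have "(\<Prod>r\<in>S. bcoef ((ii(x:=a)) r) (j r) (k r)) = (\<Prod>r\<in>S. bcoef (ii r) (j r) (k r))"
        by (rule prod.cong) (use insert(2) in auto)
      then show ?thesis using insert(1,2) by (simp add: prod.insert)
    qed
    have d: "(\<Prod>r\<in>S. fact (ii r) :: nat) dvd fact (i-a)"
      using prod_fact_dvd[OF insert(1), of ii] ii by (simp add: cs_def)
    show ?thesis unfolding p1 p2 div_key[OF _ d] using a by (simp add: div_key[OF _ d] algebra_simps)
  qed
  have "bcoef i (sum j (insert x S)) (sum k (insert x S)) = bcoef i (j x + sum j S) (k x + sum k S)"
    using insert(1,2) by simp
  also have "\<dots> = (\<Sum>a=0..i. int (i choose a) * bcoef a (j x) (k x) * bcoef (i-a) (sum j S) (sum k S))"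
    by (rule two)
  also have "\<dots> = (\<Sum>a=0..i. \<Sum>ii\<in>cs (i-a) S. ?G (ii(x:=a)))"
  proof (rule sum.cong[OF refl])
    fix a assume a: "a \<in> {0..i}"
    show "int (i choose a) * bcoef a (j x) (k x) * bcoef (i-a) (sum j S) (sum k S) = (\<Sum>ii\<in>cs (i-a) S. ?G (ii(x:=a)))"
      unfolding insert.IH sum_distrib_left by (rule sum.cong[OF refl], subst key[OF a]) simp_all
  qed
  also have "\<dots> = sum (?G \<circ> (\<lambda>(a,ii). ii(x:=a))) (SIGMA a:{0..i}. cs (i-a) S)"
    by (subst sum.Sigma) (auto simp: fin split_def)
  also have "\<dots> = sum ?G (cs i (insert x S))"
    unfolding cs_insert[OF insert(1,2)] by (rule sum.reindex[symmetric, OF cs_inj[OF insert(2)]])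
  finally show ?case .
qed

lemma comps_cs: "comps i l = cs i {1..l}"
  by (simp add: comps_def cs_def)

theorem mainTheorem18:
  fixes i l :: nat and j :: "nat \<Rightarrow> nat" and k :: "nat \<Rightarrow> int"
  assumes "l \<ge> 1"
  shows "bcoef i (\<Sum>r=1..l. j r) (\<Sum>r=1..l. k r)
       = (\<Sum>ii\<in>comps i l. int (multinom i l ii) * (\<Prod>r=1..l. bcoef (ii r) (j r) (k r)))"
  unfolding comps_cs multinom_def by (rule gen) simp

end
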